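(* If $n\ge3$, then the kernel of $\theta:FVB_n\to{\rm Aut}(F_{2n})$ is nontrivial.
   Context: $FVB_n$ is the flat virtual braid group: generators $\sigma_1,\dots,\sigma_{n-1},\rho_1,\dots,\rho_{n-1}$, relations $\sigma_i\sigma_j=\sigma_j\sigma_i$ and $\rho_i\rho_j=\rho_j\rho_i$ and $\sigma_i\rho_j=\rho_j\sigma_i$ for $|i-j|\ge2$; $\sigma_i\sigma_{i+1}\sigma_i=\sigma_{i+1}\sigma_i\sigma_{i+1}$; $\rho_i\rho_{i+1}\rho_i=\rho_{i+1}\rho_i\rho_{i+1}$; $\rho_i\rho_{i+1}\sigma_i=\sigma_{i+1}\rho_i\rho_{i+1}$; $\rho_i^2=\sigma_i^2=1$. $F_{2n}$ is free on $x_1,\dots,x_n,y_1,\dots,y_n$ and $\theta$ is the homomorphism with $\theta(\sigma_i):x_i\mapsto x_{i+1}y_{i+1},\ x_{i+1}\mapsto x_iy_{i+1}^{-1}$ and $\theta(\rho_i):x_i\leftrightarrow x_{i+1},\ y_i\leftrightarrow y_{i+1}$ (swapping), all other generators fixed; automorphisms compose on the right, $(fg)(x)=g(f(x))$. *)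

theory Defs
  imports Main
begin

(* Words in a group presentation: letters are (generator, sign), True = positive, False = inverse. *)
type_synonym 'a letter = "'a \<times> bool"

definition pos :: "'a \<Rightarrow> 'a letter" where "pos a = (a, True)"
definition neg :: "'a \<Rightarrow> 'a letter" where "neg a = (a, False)"

definition inv_word :: "'a letter list \<Rightarrow> 'a letter list" where
  "inv_word w = rev (map (\<lambda>(a, b). (a, \<not> b)) w)"

inductive pres_eq :: "'a set \<Rightarrow> 'a letter list set \<Rightarrow> 'a letter list \<Rightarrow> 'a letter list \<Rightarrow> bool"
  for A R where
  refl: "pres_eq A R w w"
| sym: "pres_eq A R u v \<Longrightarrow> pres_eq A R v u"
| trans: "pres_eq A R u v \<Longrightarrow> pres_eq A R v w \<Longrightarrow> pres_eq A R u w"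
| cancel: "a \<in> A \<Longrightarrow> pres_eq A R (u @ [(a, b), (a, \<not> b)] @ v) (u @ v)"
| rel: "r \<in> R \<Longrightarrow> pres_eq A R (u @ r @ v) (u @ v)"

datatype fvb_gen = Sig nat | Rho nat

fun fvb_idx :: "fvb_gen \<Rightarrow> nat" where
  "fvb_idx (Sig i) = i" | "fvb_idx (Rho i) = i"

definition fvb_gens :: "nat \<Rightarrow> fvb_gen set" where
  "fvb_gens n = {g. 1 \<le> fvb_idx g \<and> fvb_idx g \<le> n - 1}"

(* relation a = b is encoded by the relator a b^{-1} *)
definition fvb_relators :: "nat \<Rightarrow> fvb_gen letter list set" where
  "fvb_relators n =
     {[pos (Sig i), pos (Sig j), neg (Sig i), neg (Sig j)] | i j.
        1 \<le> i \<and> i \<le> n - 1 \<and> 1 \<le> j \<and> j \<le> n - 1 \<and> (i \<ge> j + 2 \<or> j \<ge> i + 2)}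
   \<union> {[pos (Rho i), pos (Rho j), neg (Rho i), neg (Rho j)] | i j.
        1 \<le> i \<and> i \<le> n - 1 \<and> 1 \<le> j \<and> j \<le> n - 1 \<and> (i \<ge> j + 2 \<or> j \<ge> i + 2)}
   \<union> {[pos (Sig i), pos (Rho j), neg (Sig i), neg (Rho j)] | i j.
        1 \<le> i \<and> i \<le> n - 1 \<and> 1 \<le> j \<and> j \<le> n - 1 \<and> (i \<ge> j + 2 \<or> j \<ge> i + 2)}
   \<union> {[pos (Sig i), pos (Sig (i+1)), pos (Sig i), neg (Sig (i+1)), neg (Sig i), neg (Sig (i+1))] | i.
        1 \<le> i \<and> i + 1 \<le> n - 1}
   \<union> {[pos (Rho i), pos (Rho (i+1)), pos (Rho i), neg (Rho (i+1)), neg (Rho i), neg (Rho (i+1))] | i.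
        1 \<le> i \<and> i + 1 \<le> n - 1}
   \<union> {[pos (Rho i), pos (Rho (i+1)), pos (Sig i), neg (Rho (i+1)), neg (Rho i), neg (Sig (i+1))] | i.
        1 \<le> i \<and> i + 1 \<le> n - 1}
   \<union> {[pos (Sig i), pos (Sig i)] | i. 1 \<le> i \<and> i \<le> n - 1}
   \<union> {[pos (Rho i), pos (Rho i)] | i. 1 \<le> i \<and> i \<le> n - 1}"

definition fvb_eq :: "nat \<Rightarrow> fvb_gen letter list \<Rightarrow> fvb_gen letter list \<Rightarrow> bool" where
  "fvb_eq n = pres_eq (fvb_gens n) (fvb_relators n)"

definition fvb_word :: "nat \<Rightarrow> fvb_gen letter list \<Rightarrow> bool" where
  "fvb_word n w \<longleftrightarrow> (\<forall>l \<in> set w. fst l \<in> fvb_gens n)"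

datatype fgen = X nat | Y nat

fun fgen_idx :: "fgen \<Rightarrow> nat" where
  "fgen_idx (X i) = i" | "fgen_idx (Y i) = i"

definition free_gens :: "nat \<Rightarrow> fgen set" where
  "free_gens n = {g. 1 \<le> fgen_idx g \<and> fgen_idx g \<le> n}"

definition free_eq :: "nat \<Rightarrow> fgen letter list \<Rightarrow> fgen letter list \<Rightarrow> bool" where
  "free_eq n = pres_eq (free_gens n) {}"

fun theta_gen :: "fvb_gen \<Rightarrow> fgen \<Rightarrow> fgen letter list" where
  "theta_gen (Sig i) g =
     (if g = X i then [pos (X (i+1)), pos (Y (i+1))]
      else if g = X (i+1) then [pos (X i), neg (Y (i+1))]
      else [pos g])"
| "theta_gen (Rho i) g =
     (if g = X i then [pos (X (i+1))]
      else if g = X (i+1) then [pos (X i)]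
      else if g = Y i then [pos (Y (i+1))]
      else if g = Y (i+1) then [pos (Y i)]
      else [pos g])"

definition subst :: "(fgen \<Rightarrow> fgen letter list) \<Rightarrow> fgen letter list \<Rightarrow> fgen letter list" where
  "subst f w = concat (map (\<lambda>(g, b). if b then f g else inv_word (f g)) w)"

(* theta of a word, with right composition (fg)(x) = g(f(x)):
   theta(a_1 ... a_k)(x) = theta(a_k)(... theta(a_1)(x)).
   theta(s^{-1}) = theta(s)^{-1} = theta(s), since s^2 = 1 in FVB_n and theta(s) is an involution. *)
definition theta_word :: "fvb_gen letter list \<Rightarrow> fgen \<Rightarrow> fgen letter list" where
  "theta_word w x = fold (\<lambda>l u. subst (theta_gen (fst l)) u) w [pos x]"

end

theory Submission
  imports Defs
begin

definition swp :: "nat \<Rightarrow> nat \<Rightarrow> nat" where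
  "swp i a = (if a = i then i + 1 else if a = i + 1 then i else a)"

fun act :: "fvb_gen \<Rightarrow> nat \<times> nat \<times> int \<Rightarrow> nat \<times> nat \<times> int" where
  "act (Rho i) (b, c, p) = (swp i b, swp i c, p)"
| "act (Sig i) (b, c, p) =
     (swp i b, swp i c,
      (if b = i \<and> c = i + 1 then p + 1 else if c = i \<and> b = i + 1 then p - 1 else p))"

definition actw :: "fvb_gen letter list \<Rightarrow> nat \<times> nat \<times> int \<Rightarrow> nat \<times> nat \<times> int" where
  "actw w s = fold (\<lambda>l. act (fst l)) w s"

lemma actw_append[simp]: "actw (u @ v) s = actw v (actw u s)"
  by (simp add: actw_def)

lemma actw_Cons[simp]: "actw (l # u) s = actw u (act (fst l) s)"
  by (simp add: actw_def)

lemma actw_Nil[simp]: "actw [] s = s"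
  by (simp add: actw_def)

lemma act_invol: "act g (act g s) = s"
  by (cases g; cases s) (auto simp: swp_def)

lemma rel_triv:
  assumes "r \<in> fvb_relators n"
  shows "actw r s = s"
proof -
  obtain b c p where s: "s = (b, c, p)" by (cases s)
  show ?thesis using assms unfolding fvb_relators_def
    apply (elim UnE)
    subgoal by (auto simp: s pos_def neg_def swp_def)
    subgoal by (auto simp: s pos_def neg_def swp_def)
    subgoal by (auto simp: s pos_def neg_def swp_def)
    subgoal by (auto simp: s pos_def neg_def swp_def)
    subgoal by (auto simp: s pos_def neg_def swp_def)
    subgoal by (auto simp: s pos_def neg_def swp_def)
    subgoal by (auto simp: s pos_def neg_def swp_def)
    subgoal by (auto simp: s pos_def neg_def swp_def)
    done
qed

lemma pres_act:
  assumes "pres_eq A (fvb_relators n) u v"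
  shows "actw u s = actw v s"
  using assms
proof (induction arbitrary: s rule: pres_eq.induct)
  case (cancel a u b v)
  then show ?case by (simp add: act_invol)
next
  case (rel r u v)
  then show ?case by (simp add: rel_triv)
qed auto

fun fred :: "'a letter list \<Rightarrow> 'a letter list" where
  "fred [] = []"
| "fred (x # xs) = (case fred xs of [] \<Rightarrow> [x]
     | y # ys \<Rightarrow> (if fst x = fst y \<and> snd x \<noteq> snd y then ys else x # y # ys))"

lemma pres_Cons: "pres_eq A R u v \<Longrightarrow> pres_eq A R (x # u) (x # v)"
proof (induction rule: pres_eq.induct)
  case (refl w) then show ?case by (rule pres_eq.refl)
next
  case (sym u v) then show ?case by (blast intro: pres_eq.sym)
next
  case (trans u v w) then show ?case by (blast intro: pres_eq.trans)
next
  case (cancel a u b v)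
  then show ?case using pres_eq.cancel[of a A R "x # u" b v] by simp
next
  case (rel r u v)
  then show ?case using pres_eq.rel[of r R A "x # u" v] by simp
qed

lemma pres_fred: "(\<forall>l \<in> set w. fst l \<in> A) \<Longrightarrow> pres_eq A R w (fred w)"
proof (induction w)
  case Nil then show ?case by (simp add: pres_eq.refl)
next
  case (Cons x xs)
  have h: "pres_eq A R (x # xs) (x # fred xs)" using Cons by (simp add: pres_Cons)
  show ?case
  proof (cases "fred xs")
    case Nil then show ?thesis using h by simp
  next
    case (Cons y ys)
    show ?thesis
    proof (cases "fst x = fst y \<and> snd x \<noteq> snd y")
      case True
      obtain a b where x: "x = (a, b)" by (cases x)
      have y: "y = (a, \<not> b)" using True x by (cases y) auto
      have aA: "a \<in> A" using Cons.prems x by auto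
      have "pres_eq A R ([] @ [(a, b), (a, \<not> b)] @ ys) ([] @ ys)"
        by (rule pres_eq.cancel[OF aA])
      then have "pres_eq A R (x # fred xs) ys" using x y Cons by simp
      then show ?thesis using h True Cons by (auto intro: pres_eq.trans)
    next
      case False then show ?thesis using h Cons by auto
    qed
  qed
qed

definition kw :: "fvb_gen letter list" where
  "kw = [pos (Rho 1), pos (Sig 1), pos (Rho 1), pos (Sig 2), pos (Rho 1), pos (Sig 1), pos (Rho 1), pos (Sig 2), pos (Rho 1), pos (Sig 1), pos (Rho 1), pos (Sig 2)]"

lemma kw_nontriv: "\<not> fvb_eq n kw []"
proof
  assume "fvb_eq n kw []"
  then have "actw kw (1, 2, 0) = actw [] (1, 2, 0)"
    unfolding fvb_eq_def by (rule pres_act)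
  then show False by (simp add: kw_def pos_def swp_def)
qed

lemma kw_word: "n \<ge> 3 \<Longrightarrow> fvb_word n kw"
  by (auto simp: fvb_word_def kw_def pos_def fvb_gens_def)

lemma subst_single: "subst f [pos g] = f g"
  by (simp add: subst_def pos_def)

lemma kw_fix_big:
  assumes "fgen_idx g \<ge> 4"
  shows "theta_word kw g = [pos g]"
  using assms
  by (cases g) (auto simp: theta_word_def kw_def subst_def pos_def inv_word_def)

lemma kw_fix_small:
  assumes "g \<in> {X 1, X 2, X 3, Y 1, Y 2, Y 3}"
  shows "fred (theta_word kw g) = [pos g]"
  using assms
  by (auto simp: theta_word_def kw_def subst_def pos_def neg_def inv_word_def)

lemma kw_set_small:
  assumes "g \<in> {X 1, X 2, X 3, Y 1, Y 2, Y 3}" "n \<ge> 3"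
  shows "\<forall>l \<in> set (theta_word kw g). fst l \<in> free_gens n"
  using assms
  by (auto simp: theta_word_def kw_def subst_def pos_def neg_def inv_word_def free_gens_def)

theorem proposition8:
  fixes n :: nat
  assumes "n \<ge> 3"
  shows "\<exists>w. fvb_word n w \<and> \<not> fvb_eq n w [] \<and>
           (\<forall>g \<in> free_gens n. free_eq n (theta_word w g) [pos g])"
proof (intro exI conjI ballI)
  show "fvb_word n kw" using assms by (rule kw_word)
  show "\<not> fvb_eq n kw []" by (rule kw_nontriv)
  fix g assume g: "g \<in> free_gens n"
  show "free_eq n (theta_word kw g) [pos g]"
  proof (cases "fgen_idx g \<ge> 4")
    case True
    then show ?thesis by (simp add: kw_fix_big free_eq_def pres_eq.refl)
  next
    case False
    then have gs: "g \<in> {X 1, X 2, X 3, Y 1, Y 2, Y 3}"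
      using g by (cases g) (auto simp: free_gens_def)
    have "pres_eq (free_gens n) {} (theta_word kw g) (fred (theta_word kw g))"
      by (rule pres_fred[OF kw_set_small[OF gs assms]])
    then show ?thesis using kw_fix_small[OF gs] by (simp add: free_eq_def)
  qed
qed

end
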